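(* The cut rule is admissible in the cut-free fragment of BIS4: for all bunches $\Delta$, bunched contexts $\Gamma(-)$ and formulas $\psi,\varphi$ of BIS4, if $\Delta\vdash_{\mathsf{cf}}\psi$ and $\Gamma(\psi)\vdash_{\mathsf{cf}}\varphi$, then $\Gamma(\Delta)\vdash_{\mathsf{cf}}\varphi$.
   Context: Formulas of BIS4: $\varphi,\psi ::= \top \mid \bot \mid \varphi\wedge\psi \mid \varphi\vee\psi \mid \varphi\to\psi \mid \mathsf{emp} \mid \varphi\ast\psi \mid \varphi -\!\!\ast\, \psi \mid \Box\varphi \mid a$, where $a$ ranges over a fixed set $\mathrm{Atom}$. Bunches are finite binary trees whose leaves are formulas or one of two empty bunches $\varnothing_m,\varnothing_a$, and whose internal nodes are labelled either by the multiplicative comma ($\Delta_1 \mathbin{,} \Delta_2$) or the additive semicolon ($\Delta_1 \mathbin{;} \Delta_2$). A bunched context $\Delta(-)$ is a bunch with exactly one leaf replaced by a hole; $\Delta(\Gamma)$ is the result of filling the hole with $\Gamma$. Bunch equivalence $\equiv$ is the least equivalence relation such that $\mathbin{,}$ is commutative and associative with unit $\varnothing_m$, $\mathbin{;}$ is commutative and associative with unit $\varnothing_a$, and $\Delta\equiv\Delta'$ implies $\Gamma(\Delta)\equiv\Gamma(\Delta')$. For a bunch $\Delta$, $\Box\Delta$ is the bunch obtained by replacing every formula leaf $\chi$ of $\Delta$ by $\Box\chi$ (empty bunches and node labels unchanged). The BIS4 sequent calculus has the rules: (ax) $a\vdash a$ for $a\in\mathrm{Atom}$; (equiv) from $\Delta'\vdash\varphi$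 and $\Delta\equiv\Delta'$ infer $\Delta\vdash\varphi$; (W;) from $\Delta(\Delta_1)\vdash\varphi$ infer $\Delta(\Delta_1\mathbin{;}\Delta_2)\vdash\varphi$; (C;) from $\Delta(\Delta_1\mathbin{;}\Delta_1)\vdash\varphi$ infer $\Delta(\Delta_1)\vdash\varphi$; (cut) from $\Delta'\vdash A$ and $\Delta(A)\vdash B$ infer $\Delta(\Delta')\vdash B$; (empR) $\varnothing_m\vdash\mathsf{emp}$; (empL) from $\Delta(\varnothing_m)\vdash\varphi$ infer $\Delta(\mathsf{emp})\vdash\varphi$; ($\ast$R) from $\Delta_1\vdash\varphi$, $\Delta_2\vdash\psi$ infer $\Delta_1\mathbin{,}\Delta_2\vdash\varphi\ast\psi$; ($\ast$L) from $\Delta(\varphi\mathbin{,}\psi)\vdash\chi$ infer $\Delta(\varphi\ast\psi)\vdash\chi$; ($-\!\ast$R) from $\Delta\mathbin{,}\varphi\vdash\psi$ infer $\Delta\vdash\varphi-\!\!\ast\,\psi$; ($-\!\ast$L) from $\Delta_1\vdash\varphi$ and $\Delta(\Delta_2\mathbin{,}\psi)\vdash\chi$ infer $\Delta((\Delta_1\mathbin{,}\Delta_2)\mathbin{,}(\varphi-\!\!\ast\,\psi))\vdash\chi$; ($\top$R) $\varnothing_a\vdash\top$; ($\top$L) from $\Delta(\varnothing_a)\vdash\varphi$ infer $\Delta(\top)\vdash\varphi$; ($\wedge$R) from $\Delta_1\vdash\varphi$, $\Delta_2\vdash\psi$ infer $\Delta_1\mathbin{;}\Delta_2\vdash\varphi\wedge\psi$;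 ($\wedge$L) from $\Delta(\varphi\mathbin{;}\psi)\vdash\chi$ infer $\Delta(\varphi\wedge\psi)\vdash\chi$; ($\to$R) from $\Delta\mathbin{;}\varphi\vdash\psi$ infer $\Delta\vdash\varphi\to\psi$; ($\to$L) from $\Delta_1\vdash\varphi$ and $\Delta(\Delta_2\mathbin{;}\psi)\vdash\chi$ infer $\Delta((\Delta_1\mathbin{;}\Delta_2)\mathbin{;}(\varphi\to\psi))\vdash\chi$; ($\bot$L) $\Delta(\bot)\vdash\varphi$; ($\vee$R1),($\vee$R2) from $\Delta\vdash\varphi$ (resp. $\Delta\vdash\psi$) infer $\Delta\vdash\varphi\vee\psi$; ($\vee$L) from $\Delta(\varphi)\vdash\chi$ and $\Delta(\psi)\vdash\chi$ infer $\Delta(\varphi\vee\psi)\vdash\chi$; ($\Box$R) from $\Box\Delta\vdash A$ infer $\Box\Delta\vdash\Box A$; ($\Box$L) from $\Delta(A)\vdash B$ infer $\Delta(\Box A)\vdash B$. $\Delta\vdash_{\mathsf{cf}}\varphi$ means $\Delta\vdash\varphi$ is derivable in BIS4 without the (cut) rule. *)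

theory Defs
  imports Main
begin

datatype 'a fm =
    Top | Bot | Conj "'a fm" "'a fm" | Disj "'a fm" "'a fm" | Imp "'a fm" "'a fm"
  | Emp | Star "'a fm" "'a fm" | Wand "'a fm" "'a fm" | Box "'a fm" | Atom 'a

datatype 'a bunch =
    Fm "'a fm" | EmpM | EmpA
  | Comma "'a bunch" "'a bunch" | Semi "'a bunch" "'a bunch"

datatype 'a ctx =
    Hole
  | CommaL "'a ctx" "'a bunch" | CommaR "'a bunch" "'a ctx"
  | SemiL "'a ctx" "'a bunch" | SemiR "'a bunch" "'a ctx"

primrec fill :: "'a ctx \<Rightarrow> 'a bunch \<Rightarrow> 'a bunch" where
  "fill Hole G = G"
| "fill (CommaL C B) G = Comma (fill C G) B"
| "fill (CommaR B C) G = Comma B (fill C G)"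
| "fill (SemiL C B) G = Semi (fill C G) B"
| "fill (SemiR B C) G = Semi B (fill C G)"

inductive beq :: "'a bunch \<Rightarrow> 'a bunch \<Rightarrow> bool" where
  refl: "beq D D"
| sym: "beq D D' \<Longrightarrow> beq D' D"
| trans: "beq D1 D2 \<Longrightarrow> beq D2 D3 \<Longrightarrow> beq D1 D3"
| comma_comm: "beq (Comma D1 D2) (Comma D2 D1)"
| comma_assoc: "beq (Comma D1 (Comma D2 D3)) (Comma (Comma D1 D2) D3)"
| comma_unit: "beq (Comma D EmpM) D"
| semi_comm: "beq (Semi D1 D2) (Semi D2 D1)"
| semi_assoc: "beq (Semi D1 (Semi D2 D3)) (Semi (Semi D1 D2) D3)"
| semi_unit: "beq (Semi D EmpA) D"
| cong: "beq D D' \<Longrightarrow> beq (fill C D) (fill C D')"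

primrec boxb :: "'a bunch \<Rightarrow> 'a bunch" where
  "boxb (Fm A) = Fm (Box A)"
| "boxb EmpM = EmpM"
| "boxb EmpA = EmpA"
| "boxb (Comma D1 D2) = Comma (boxb D1) (boxb D2)"
| "boxb (Semi D1 D2) = Semi (boxb D1) (boxb D2)"

inductive cf :: "'a bunch \<Rightarrow> 'a fm \<Rightarrow> bool" where
  ax: "cf (Fm (Atom a)) (Atom a)"
| equiv: "cf D' A \<Longrightarrow> beq D D' \<Longrightarrow> cf D A"
| weakSemi: "cf (fill C D1) A \<Longrightarrow> cf (fill C (Semi D1 D2)) A"
| contrSemi: "cf (fill C (Semi D1 D1)) A \<Longrightarrow> cf (fill C D1) A"
| empR: "cf EmpM Emp"
| empL: "cf (fill C EmpM) A \<Longrightarrow> cf (fill C (Fm Emp)) A"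
| starR: "cf D1 A \<Longrightarrow> cf D2 B \<Longrightarrow> cf (Comma D1 D2) (Star A B)"
| starL: "cf (fill C (Comma (Fm A) (Fm B))) X \<Longrightarrow> cf (fill C (Fm (Star A B))) X"
| wandR: "cf (Comma D (Fm A)) B \<Longrightarrow> cf D (Wand A B)"
| wandL: "cf D1 A \<Longrightarrow> cf (fill C (Comma D2 (Fm B))) X
          \<Longrightarrow> cf (fill C (Comma (Comma D1 D2) (Fm (Wand A B)))) X"
| topR: "cf EmpA Top"
| topL: "cf (fill C EmpA) A \<Longrightarrow> cf (fill C (Fm Top)) A"
| conjR: "cf D1 A \<Longrightarrow> cf D2 B \<Longrightarrow> cf (Semi D1 D2) (Conj A B)"
| conjL: "cf (fill C (Semi (Fm A) (Fm B))) X \<Longrightarrow> cf (fill C (Fm (Conj A B))) X"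
| impR: "cf (Semi D (Fm A)) B \<Longrightarrow> cf D (Imp A B)"
| impL: "cf D1 A \<Longrightarrow> cf (fill C (Semi D2 (Fm B))) X
          \<Longrightarrow> cf (fill C (Semi (Semi D1 D2) (Fm (Imp A B)))) X"
| botL: "cf (fill C (Fm Bot)) A"
| disjR1: "cf D A \<Longrightarrow> cf D (Disj A B)"
| disjR2: "cf D B \<Longrightarrow> cf D (Disj A B)"
| disjL: "cf (fill C (Fm A)) X \<Longrightarrow> cf (fill C (Fm B)) X \<Longrightarrow> cf (fill C (Fm (Disj A B))) X"
| boxR: "cf (boxb D) A \<Longrightarrow> cf (boxb D) (Box A)"
| boxL: "cf (fill C (Fm A)) B \<Longrightarrow> cf (fill C (Fm (Box A))) B"

end

theory Submission
  imports Defs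
begin


primrec ccomp :: "'a ctx \<Rightarrow> 'a ctx \<Rightarrow> 'a ctx" where
  "ccomp Hole E = E"
| "ccomp (CommaL C B) E = CommaL (ccomp C E) B"
| "ccomp (CommaR B C) E = CommaR B (ccomp C E)"
| "ccomp (SemiL C B) E = SemiL (ccomp C E) B"
| "ccomp (SemiR B C) E = SemiR B (ccomp C E)"

lemma fill_ccomp: "fill (ccomp C E) X = fill C (fill E X)"
  by (induction C) auto

inductive repl :: "'a fm \<Rightarrow> 'a bunch \<Rightarrow> 'a bunch \<Rightarrow> 'a bunch \<Rightarrow> bool"
  for p :: "'a fm" and D :: "'a bunch" where
  rfm: "repl p D (Fm p) D"
| rid: "repl p D B B"
| rcomma: "repl p D X1 Y1 \<Longrightarrow> repl p D X2 Y2 \<Longrightarrow> repl p D (Comma X1 X2) (Comma Y1 Y2)"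
| rsemi: "repl p D X1 Y1 \<Longrightarrow> repl p D X2 Y2 \<Longrightarrow> repl p D (Semi X1 X2) (Semi Y1 Y2)"

inductive replc :: "'a fm \<Rightarrow> 'a bunch \<Rightarrow> 'a ctx \<Rightarrow> 'a ctx \<Rightarrow> bool"
  for p :: "'a fm" and D :: "'a bunch" where
  chole: "replc p D Hole Hole"
| ccl: "replc p D C C' \<Longrightarrow> repl p D B B' \<Longrightarrow> replc p D (CommaL C B) (CommaL C' B')"
| ccr: "repl p D B B' \<Longrightarrow> replc p D C C' \<Longrightarrow> replc p D (CommaR B C) (CommaR B' C')"
| csl: "replc p D C C' \<Longrightarrow> repl p D B B' \<Longrightarrow> replc p D (SemiL C B) (SemiL C' B')"
| csr: "repl p D B B' \<Longrightarrow> replc p D C C' \<Longrightarrow> replc p D (SemiR B C) (SemiR B' C')"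

lemma replc_refl: "replc p D C C"
  by (induction C) (auto intro: replc.intros repl.rid)

lemma repl_fill: "replc p D C C' \<Longrightarrow> repl p D X Y \<Longrightarrow> repl p D (fill C X) (fill C' Y)"
  by (induction rule: replc.induct) (auto intro: repl.intros)

lemma repl_Comma_inv: "repl p D (Comma X1 X2) Y \<Longrightarrow> \<exists>Y1 Y2. Y = Comma Y1 Y2 \<and> repl p D X1 Y1 \<and> repl p D X2 Y2"
  by (erule repl.cases) (auto intro: repl.rid)

lemma repl_Semi_inv: "repl p D (Semi X1 X2) Y \<Longrightarrow> \<exists>Y1 Y2. Y = Semi Y1 Y2 \<and> repl p D X1 Y1 \<and> repl p D X2 Y2"
  by (erule repl.cases) (auto intro: repl.rid)

lemma repl_Fm_inv: "repl p D (Fm q) Y \<Longrightarrow> Y = Fm q \<or> (q = p \<and> Y = D)"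
  by (erule repl.cases) auto

lemma repl_EmpM_inv: "repl p D EmpM Y \<Longrightarrow> Y = EmpM"
  by (erule repl.cases) auto

lemma repl_EmpA_inv: "repl p D EmpA Y \<Longrightarrow> Y = EmpA"
  by (erule repl.cases) auto

lemma repl_fill_dec: "repl p D (fill C X) Y \<Longrightarrow> \<exists>C' Y'. Y = fill C' Y' \<and> replc p D C C' \<and> repl p D X Y'"
proof (induction C arbitrary: Y)
  case Hole
  then have "Y = fill Hole Y \<and> replc p D Hole Hole \<and> repl p D X Y" by (simp add: replc.chole)
  then show ?case by blast
next
  case (CommaL C B)
  from repl_Comma_inv[OF CommaL.prems[simplified]] obtain Y1 Y2 where
    y: "Y = Comma Y1 Y2" "repl p D (fill C X) Y1" "repl p D B Y2" by blast
  from CommaL.IH[OF y(2)] obtain C' Y' where c: "Y1 = fill C' Y'" "replc p D C C'" "repl p D X Y'" by blast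
  have "Y = fill (CommaL C' Y2) Y' \<and> replc p D (CommaL C B) (CommaL C' Y2) \<and> repl p D X Y'"
    using y c by (simp add: replc.ccl)
  then show ?case by blast
next
  case (CommaR B C)
  from repl_Comma_inv[OF CommaR.prems[simplified]] obtain Y1 Y2 where
    y: "Y = Comma Y1 Y2" "repl p D B Y1" "repl p D (fill C X) Y2" by blast
  from CommaR.IH[OF y(3)] obtain C' Y' where c: "Y2 = fill C' Y'" "replc p D C C'" "repl p D X Y'" by blast
  have "Y = fill (CommaR Y1 C') Y' \<and> replc p D (CommaR B C) (CommaR Y1 C') \<and> repl p D X Y'"
    using y c by (simp add: replc.ccr)
  then show ?case by blast
next
  case (SemiL C B)
  from repl_Semi_inv[OF SemiL.prems[simplified]] obtain Y1 Y2 where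
    y: "Y = Semi Y1 Y2" "repl p D (fill C X) Y1" "repl p D B Y2" by blast
  from SemiL.IH[OF y(2)] obtain C' Y' where c: "Y1 = fill C' Y'" "replc p D C C'" "repl p D X Y'" by blast
  have "Y = fill (SemiL C' Y2) Y' \<and> replc p D (SemiL C B) (SemiL C' Y2) \<and> repl p D X Y'"
    using y c by (simp add: replc.csl)
  then show ?case by blast
next
  case (SemiR B C)
  from repl_Semi_inv[OF SemiR.prems[simplified]] obtain Y1 Y2 where
    y: "Y = Semi Y1 Y2" "repl p D B Y1" "repl p D (fill C X) Y2" by blast
  from SemiR.IH[OF y(3)] obtain C' Y' where c: "Y2 = fill C' Y'" "replc p D C C'" "repl p D X Y'" by blast
  have "Y = fill (SemiR Y1 C') Y' \<and> replc p D (SemiR B C) (SemiR Y1 C') \<and> repl p D X Y'"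
    using y c by (simp add: replc.csr)
  then show ?case by blast
qed

lemma repl_boxb: "(\<And>\<chi>. p = Box \<chi> \<Longrightarrow> \<exists>F. D = boxb F) \<Longrightarrow> repl p D (boxb B) Y \<Longrightarrow> \<exists>Y1. Y = boxb Y1"
proof (induction B arbitrary: Y)
  case (Fm x)
  from repl_Fm_inv[of p D "Box x" Y] Fm.prems(2) have "Y = Fm (Box x) \<or> (Box x = p \<and> Y = D)" by simp
  then show ?case
  proof
    assume "Y = Fm (Box x)" then have "Y = boxb (Fm x)" by simp
    then show ?case by blast
  next
    assume "Box x = p \<and> Y = D" then show ?case using Fm.prems(1) by blast
  qed
next
  case EmpM
  then show ?case by (metis boxb.simps(2) repl_EmpM_inv)
next
  case EmpA
  then show ?case by (metis boxb.simps(3) repl_EmpA_inv)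
next
  case (Comma B1 B2)
  from repl_Comma_inv[of p D "boxb B1" "boxb B2" Y] Comma.prems(2) obtain Y1 Y2 where
    "Y = Comma Y1 Y2" "repl p D (boxb B1) Y1" "repl p D (boxb B2) Y2" by auto
  with Comma.IH Comma.prems(1) obtain Z1 Z2 where "Y1 = boxb Z1" "Y2 = boxb Z2" by metis
  then have "Y = boxb (Comma Z1 Z2)" using \<open>Y = Comma Y1 Y2\<close> by simp
  then show ?case by blast
next
  case (Semi B1 B2)
  from repl_Semi_inv[of p D "boxb B1" "boxb B2" Y] Semi.prems(2) obtain Y1 Y2 where
    "Y = Semi Y1 Y2" "repl p D (boxb B1) Y1" "repl p D (boxb B2) Y2" by auto
  with Semi.IH Semi.prems(1) obtain Z1 Z2 where "Y1 = boxb Z1" "Y2 = boxb Z2" by metis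
  then have "Y = boxb (Semi Z1 Z2)" using \<open>Y = Semi Y1 Y2\<close> by simp
  then show ?case by blast
qed

lemma beq_comma: "beq A A' \<Longrightarrow> beq B B' \<Longrightarrow> beq (Comma A B) (Comma A' B')"
proof -
  assume "beq A A'" "beq B B'"
  then have "beq (Comma A B) (Comma A' B)" "beq (Comma A' B) (Comma A' B')"
    using beq.cong[of A A' "CommaL Hole B"] beq.cong[of B B' "CommaR A' Hole"] by simp_all
  then show ?thesis by (rule beq.trans)
qed

lemma beq_semi: "beq A A' \<Longrightarrow> beq B B' \<Longrightarrow> beq (Semi A B) (Semi A' B')"
proof -
  assume "beq A A'" "beq B B'"
  then have "beq (Semi A B) (Semi A' B)" "beq (Semi A' B) (Semi A' B')"
    using beq.cong[of A A' "SemiL Hole B"] beq.cong[of B B' "SemiR A' Hole"] by simp_all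
  then show ?thesis by (rule beq.trans)
qed

lemma repl_beq: "beq X X' \<Longrightarrow> (\<forall>Y. repl p D X Y \<longrightarrow> (\<exists>Y'. repl p D X' Y' \<and> beq Y Y'))
   \<and> (\<forall>Y'. repl p D X' Y' \<longrightarrow> (\<exists>Y. repl p D X Y \<and> beq Y Y'))"
proof (induction rule: beq.induct)
  case (refl D)
  then show ?case by (auto intro: beq.refl)
next
  case (sym E E')
  show ?case
  proof (intro conjI allI impI)
    fix Y assume "repl p D E' Y"
    with sym obtain Y' where "repl p D E Y'" "beq Y' Y" by blast
    then show "\<exists>Y'. repl p D E Y' \<and> beq Y Y'" using beq.sym by blast
  next
    fix Y assume "repl p D E Y"
    with sym obtain Y' where "repl p D E' Y'" "beq Y Y'" by blast
    then show "\<exists>Y'. repl p D E' Y' \<and> beq Y' Y" using beq.sym by blast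
  qed
next
  case (trans E1 E2 E3)
  show ?case
  proof (intro conjI allI impI)
    fix Y assume "repl p D E1 Y"
    with trans obtain Y' where "repl p D E2 Y'" "beq Y Y'" by blast
    with trans obtain Y'' where "repl p D E3 Y''" "beq Y' Y''" by blast
    then show "\<exists>Y'. repl p D E3 Y' \<and> beq Y Y'" using beq.trans \<open>beq Y Y'\<close> by blast
  next
    fix Y assume "repl p D E3 Y"
    with trans obtain Y' where "repl p D E2 Y'" "beq Y' Y" by blast
    with trans obtain Y'' where "repl p D E1 Y''" "beq Y'' Y'" by blast
    then show "\<exists>Y'. repl p D E1 Y' \<and> beq Y' Y" using beq.trans \<open>beq Y' Y\<close> by blast
  qed
next
  case (comma_comm E1 E2)
  show ?case
  proof (intro conjI allI impI)
    fix Y assume "repl p D (Comma E1 E2) Y"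
    then obtain Y1 Y2 where "Y = Comma Y1 Y2" "repl p D E1 Y1" "repl p D E2 Y2" using repl_Comma_inv by blast
    then have "repl p D (Comma E2 E1) (Comma Y2 Y1) \<and> beq Y (Comma Y2 Y1)" by (simp add: repl.rcomma beq.comma_comm)
    then show "\<exists>Y'. repl p D (Comma E2 E1) Y' \<and> beq Y Y'" by blast
  next
    fix Y assume "repl p D (Comma E2 E1) Y"
    then obtain Y1 Y2 where "Y = Comma Y1 Y2" "repl p D E2 Y1" "repl p D E1 Y2" using repl_Comma_inv by blast
    then have "repl p D (Comma E1 E2) (Comma Y2 Y1) \<and> beq (Comma Y2 Y1) Y" by (simp add: repl.rcomma beq.comma_comm)
    then show "\<exists>Y'. repl p D (Comma E1 E2) Y' \<and> beq Y' Y" by blast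
  qed
next
  case (comma_assoc E1 E2 E3)
  show ?case
  proof (intro conjI allI impI)
    fix Y assume "repl p D (Comma E1 (Comma E2 E3)) Y"
    then obtain Y1 Y2 Y3 where "Y = Comma Y1 (Comma Y2 Y3)" "repl p D E1 Y1" "repl p D E2 Y2" "repl p D E3 Y3"
      using repl_Comma_inv by metis
    then have "repl p D (Comma (Comma E1 E2) E3) (Comma (Comma Y1 Y2) Y3) \<and> beq Y (Comma (Comma Y1 Y2) Y3)"
      by (simp add: repl.rcomma beq.comma_assoc)
    then show "\<exists>Y'. repl p D (Comma (Comma E1 E2) E3) Y' \<and> beq Y Y'" by blast
  next
    fix Y assume "repl p D (Comma (Comma E1 E2) E3) Y"
    then obtain Y1 Y2 Y3 where "Y = Comma (Comma Y1 Y2) Y3" "repl p D E1 Y1" "repl p D E2 Y2" "repl p D E3 Y3"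
      using repl_Comma_inv by metis
    then have "repl p D (Comma E1 (Comma E2 E3)) (Comma Y1 (Comma Y2 Y3)) \<and> beq (Comma Y1 (Comma Y2 Y3)) Y"
      by (simp add: repl.rcomma beq.comma_assoc)
    then show "\<exists>Y'. repl p D (Comma E1 (Comma E2 E3)) Y' \<and> beq Y' Y" by blast
  qed
next
  case (comma_unit E)
  show ?case
  proof (intro conjI allI impI)
    fix Y assume "repl p D (Comma E EmpM) Y"
    then obtain Y1 Y2 where "Y = Comma Y1 Y2" "repl p D E Y1" "repl p D EmpM Y2" using repl_Comma_inv by blast
    then have "repl p D E Y1 \<and> beq Y Y1" using repl_EmpM_inv by (metis beq.comma_unit)
    then show "\<exists>Y'. repl p D E Y' \<and> beq Y Y'" by blast
  next
    fix Y assume "repl p D E Y"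
    then have "repl p D (Comma E EmpM) (Comma Y EmpM) \<and> beq (Comma Y EmpM) Y" by (simp add: repl.rcomma repl.rid beq.comma_unit)
    then show "\<exists>Y'. repl p D (Comma E EmpM) Y' \<and> beq Y' Y" by blast
  qed
next
  case (semi_comm E1 E2)
  show ?case
  proof (intro conjI allI impI)
    fix Y assume "repl p D (Semi E1 E2) Y"
    then obtain Y1 Y2 where "Y = Semi Y1 Y2" "repl p D E1 Y1" "repl p D E2 Y2" using repl_Semi_inv by blast
    then have "repl p D (Semi E2 E1) (Semi Y2 Y1) \<and> beq Y (Semi Y2 Y1)" by (simp add: repl.rsemi beq.semi_comm)
    then show "\<exists>Y'. repl p D (Semi E2 E1) Y' \<and> beq Y Y'" by blast
  next
    fix Y assume "repl p D (Semi E2 E1) Y"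
    then obtain Y1 Y2 where "Y = Semi Y1 Y2" "repl p D E2 Y1" "repl p D E1 Y2" using repl_Semi_inv by blast
    then have "repl p D (Semi E1 E2) (Semi Y2 Y1) \<and> beq (Semi Y2 Y1) Y" by (simp add: repl.rsemi beq.semi_comm)
    then show "\<exists>Y'. repl p D (Semi E1 E2) Y' \<and> beq Y' Y" by blast
  qed
next
  case (semi_assoc E1 E2 E3)
  show ?case
  proof (intro conjI allI impI)
    fix Y assume "repl p D (Semi E1 (Semi E2 E3)) Y"
    then obtain Y1 Y2 Y3 where "Y = Semi Y1 (Semi Y2 Y3)" "repl p D E1 Y1" "repl p D E2 Y2" "repl p D E3 Y3"
      using repl_Semi_inv by metis
    then have "repl p D (Semi (Semi E1 E2) E3) (Semi (Semi Y1 Y2) Y3) \<and> beq Y (Semi (Semi Y1 Y2) Y3)"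
      by (simp add: repl.rsemi beq.semi_assoc)
    then show "\<exists>Y'. repl p D (Semi (Semi E1 E2) E3) Y' \<and> beq Y Y'" by blast
  next
    fix Y assume "repl p D (Semi (Semi E1 E2) E3) Y"
    then obtain Y1 Y2 Y3 where "Y = Semi (Semi Y1 Y2) Y3" "repl p D E1 Y1" "repl p D E2 Y2" "repl p D E3 Y3"
      using repl_Semi_inv by metis
    then have "repl p D (Semi E1 (Semi E2 E3)) (Semi Y1 (Semi Y2 Y3)) \<and> beq (Semi Y1 (Semi Y2 Y3)) Y"
      by (simp add: repl.rsemi beq.semi_assoc)
    then show "\<exists>Y'. repl p D (Semi E1 (Semi E2 E3)) Y' \<and> beq Y' Y" by blast
  qed
next
  case (semi_unit E)
  show ?case
  proof (intro conjI allI impI)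
    fix Y assume "repl p D (Semi E EmpA) Y"
    then obtain Y1 Y2 where "Y = Semi Y1 Y2" "repl p D E Y1" "repl p D EmpA Y2" using repl_Semi_inv by blast
    then have "repl p D E Y1 \<and> beq Y Y1" using repl_EmpA_inv by (metis beq.semi_unit)
    then show "\<exists>Y'. repl p D E Y' \<and> beq Y Y'" by blast
  next
    fix Y assume "repl p D E Y"
    then have "repl p D (Semi E EmpA) (Semi Y EmpA) \<and> beq (Semi Y EmpA) Y" by (simp add: repl.rsemi repl.rid beq.semi_unit)
    then show "\<exists>Y'. repl p D (Semi E EmpA) Y' \<and> beq Y' Y" by blast
  qed
next
  case (cong E E' C)
  show ?case
  proof (intro conjI allI impI)
    fix Y assume "repl p D (fill C E) Y"
    then obtain C' Y0 where "Y = fill C' Y0" "replc p D C C'" "repl p D E Y0"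
      using repl_fill_dec by blast
    with cong obtain Y0' where "repl p D E' Y0'" "beq Y0 Y0'" by blast
    then show "\<exists>Y'. repl p D (fill C E') Y' \<and> beq Y Y'"
      using \<open>Y = fill C' Y0\<close> \<open>replc p D C C'\<close> repl_fill beq.cong by blast
  next
    fix Y' assume "repl p D (fill C E') Y'"
    then obtain C' Y0 where "Y' = fill C' Y0" "replc p D C C'" "repl p D E' Y0"
      using repl_fill_dec by blast
    with cong obtain Y0' where "repl p D E Y0'" "beq Y0' Y0" by blast
    then show "\<exists>Y. repl p D (fill C E) Y \<and> beq Y Y'"
      using \<open>Y' = fill C' Y0\<close> \<open>replc p D C C'\<close> repl_fill beq.cong by blast
  qed
qed



lemma right_gen:
  assumes "cf X phi" and "repl psi D X Y"
  and Hcf: "cf D psi"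
  and Hbox: "\<And>\<chi>. psi = Box \<chi> \<Longrightarrow> \<exists>F. D = boxb F"
  and Pemp: "\<And>C \<phi>. psi = Emp \<Longrightarrow> cf (fill C EmpM) \<phi> \<Longrightarrow> cf (fill C D) \<phi>"
  and Ptop: "\<And>C \<phi>. psi = Top \<Longrightarrow> cf (fill C EmpA) \<phi> \<Longrightarrow> cf (fill C D) \<phi>"
  and Pstar: "\<And>A B C \<phi>. psi = Star A B \<Longrightarrow> cf (fill C (Comma (Fm A) (Fm B))) \<phi> \<Longrightarrow> cf (fill C D) \<phi>"
  and Pconj: "\<And>A B C \<phi>. psi = Conj A B \<Longrightarrow> cf (fill C (Semi (Fm A) (Fm B))) \<phi> \<Longrightarrow> cf (fill C D) \<phi>"
  and Pwand: "\<And>A B C \<phi> E1 E2. psi = Wand A B \<Longrightarrow> cf E1 A \<Longrightarrow> cf (fill C (Comma E2 (Fm B))) \<phi>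
                \<Longrightarrow> cf (fill C (Comma (Comma E1 E2) D)) \<phi>"
  and Pimp: "\<And>A B C \<phi> E1 E2. psi = Imp A B \<Longrightarrow> cf E1 A \<Longrightarrow> cf (fill C (Semi E2 (Fm B))) \<phi>
                \<Longrightarrow> cf (fill C (Semi (Semi E1 E2) D)) \<phi>"
  and Pbot: "\<And>C \<phi>. psi = Bot \<Longrightarrow> cf (fill C D) \<phi>"
  and Pdisj: "\<And>A B C \<phi>. psi = Disj A B \<Longrightarrow> cf (fill C (Fm A)) \<phi> \<Longrightarrow> cf (fill C (Fm B)) \<phi> \<Longrightarrow> cf (fill C D) \<phi>"
  and Pbox: "\<And>A C \<phi>. psi = Box A \<Longrightarrow> cf (fill C (Fm A)) \<phi> \<Longrightarrow> cf (fill C D) \<phi>"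
  shows "cf Y phi"
  using assms(1,2)
proof (induction arbitrary: Y rule: cf.induct)
  case (ax a)
  then show ?case using repl_Fm_inv[OF ax] Hcf cf.ax by metis
next
  case (equiv X' A X)
  from repl_beq[OF equiv(2)] equiv.prems obtain Y' where "repl psi D X' Y'" "beq Y Y'" by blast
  then show ?case using equiv.IH cf.equiv by blast
next
  case (weakSemi C0 D1 A D2)
  from repl_fill_dec[OF weakSemi.prems] obtain C' Y0 where
    y: "Y = fill C' Y0" "replc psi D C0 C'" "repl psi D (Semi D1 D2) Y0" by blast
  from repl_Semi_inv[OF y(3)] obtain E1 E2 where e: "Y0 = Semi E1 E2" "repl psi D D1 E1" by blast
  have "cf (fill C' E1) A" using weakSemi.IH repl_fill[OF y(2) e(2)] by blast
  then show ?case using y(1) e(1) cf.weakSemi by blast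
next
  case (contrSemi C0 D1 A)
  from repl_fill_dec[OF contrSemi.prems] obtain C' Y0 where
    y: "Y = fill C' Y0" "replc psi D C0 C'" "repl psi D D1 Y0" by blast
  have "repl psi D (Semi D1 D1) (Semi Y0 Y0)" by (rule repl.rsemi[OF y(3) y(3)])
  then have "cf (fill C' (Semi Y0 Y0)) A" using contrSemi.IH repl_fill[OF y(2)] by blast
  then show ?case using y(1) cf.contrSemi by blast
next
  case empR
  then show ?case using repl_EmpM_inv cf.empR by metis
next
  case (empL C0 A)
  from repl_fill_dec[OF empL.prems] obtain C' Y0 where
    y: "Y = fill C' Y0" "replc psi D C0 C'" "repl psi D (Fm Emp) Y0" by blast
  have h: "cf (fill C' EmpM) A" using empL.IH repl_fill[OF y(2) repl.rid] by blast
  from repl_Fm_inv[OF y(3)] show ?case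
  proof
    assume "Y0 = Fm Emp" then show ?case using y(1) h cf.empL by blast
  next
    assume "Emp = psi \<and> Y0 = D" then show ?case using y(1) h Pemp by blast
  qed
next
  case (starR D1 A D2 B)
  from repl_Comma_inv[OF starR.prems] obtain Y1 Y2 where
    "Y = Comma Y1 Y2" "repl psi D D1 Y1" "repl psi D D2 Y2" by blast
  then show ?case using starR.IH cf.starR by blast
next
  case (starL C0 A B X)
  from repl_fill_dec[OF starL.prems] obtain C' Y0 where
    y: "Y = fill C' Y0" "replc psi D C0 C'" "repl psi D (Fm (Star A B)) Y0" by blast
  have h: "cf (fill C' (Comma (Fm A) (Fm B))) X" using starL.IH repl_fill[OF y(2) repl.rid] by blast
  from repl_Fm_inv[OF y(3)] show ?case
  proof
    assume "Y0 = Fm (Star A B)" then show ?case using y(1) h cf.starL by blast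
  next
    assume "Star A B = psi \<and> Y0 = D" then show ?case using y(1) h Pstar by blast
  qed
next
  case (wandR D0 A B)
  have "repl psi D (Comma D0 (Fm A)) (Comma Y (Fm A))" using wandR.prems repl.rid by (rule repl.rcomma)
  then show ?case using wandR.IH cf.wandR by blast
next
  case (wandL D1 A C0 D2 B X)
  from repl_fill_dec[OF wandL.prems] obtain C' Y0 where
    y: "Y = fill C' Y0" "replc psi D C0 C'" "repl psi D (Comma (Comma D1 D2) (Fm (Wand A B))) Y0" by blast
  from repl_Comma_inv[OF y(3)] obtain Y01 Z where z: "Y0 = Comma Y01 Z" "repl psi D (Comma D1 D2) Y01"
      "repl psi D (Fm (Wand A B)) Z" by blast
  from repl_Comma_inv[OF z(2)] obtain E1 E2 where e: "Y01 = Comma E1 E2" "repl psi D D1 E1" "repl psi D D2 E2"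
    by blast
  have h1: "cf E1 A" using wandL.IH(1) e(2) by blast
  have "repl psi D (Comma D2 (Fm B)) (Comma E2 (Fm B))" using e(3) repl.rid by (rule repl.rcomma)
  then have h2: "cf (fill C' (Comma E2 (Fm B))) X" using wandL.IH(2) repl_fill[OF y(2)] by blast
  from repl_Fm_inv[OF z(3)] show ?case
  proof
    assume "Z = Fm (Wand A B)" then show ?case using y(1) z(1) e(1) h1 h2 cf.wandL by blast
  next
    assume "Wand A B = psi \<and> Z = D" then show ?case using y(1) z(1) e(1) h1 h2 Pwand by blast
  qed
next
  case topR
  then show ?case using repl_EmpA_inv cf.topR by metis
next
  case (topL C0 A)
  from repl_fill_dec[OF topL.prems] obtain C' Y0 where
    y: "Y = fill C' Y0" "replc psi D C0 C'" "repl psi D (Fm Top) Y0" by blast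
  have h: "cf (fill C' EmpA) A" using topL.IH repl_fill[OF y(2) repl.rid] by blast
  from repl_Fm_inv[OF y(3)] show ?case
  proof
    assume "Y0 = Fm Top" then show ?case using y(1) h cf.topL by blast
  next
    assume "Top = psi \<and> Y0 = D" then show ?case using y(1) h Ptop by blast
  qed
next
  case (conjR D1 A D2 B)
  from repl_Semi_inv[OF conjR.prems] obtain Y1 Y2 where
    "Y = Semi Y1 Y2" "repl psi D D1 Y1" "repl psi D D2 Y2" by blast
  then show ?case using conjR.IH cf.conjR by blast
next
  case (conjL C0 A B X)
  from repl_fill_dec[OF conjL.prems] obtain C' Y0 where
    y: "Y = fill C' Y0" "replc psi D C0 C'" "repl psi D (Fm (Conj A B)) Y0" by blast
  have h: "cf (fill C' (Semi (Fm A) (Fm B))) X" using conjL.IH repl_fill[OF y(2) repl.rid] by blast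
  from repl_Fm_inv[OF y(3)] show ?case
  proof
    assume "Y0 = Fm (Conj A B)" then show ?case using y(1) h cf.conjL by blast
  next
    assume "Conj A B = psi \<and> Y0 = D" then show ?case using y(1) h Pconj by blast
  qed
next
  case (impR D0 A B)
  have "repl psi D (Semi D0 (Fm A)) (Semi Y (Fm A))" using impR.prems repl.rid by (rule repl.rsemi)
  then show ?case using impR.IH cf.impR by blast
next
  case (impL D1 A C0 D2 B X)
  from repl_fill_dec[OF impL.prems] obtain C' Y0 where
    y: "Y = fill C' Y0" "replc psi D C0 C'" "repl psi D (Semi (Semi D1 D2) (Fm (Imp A B))) Y0" by blast
  from repl_Semi_inv[OF y(3)] obtain Y01 Z where z: "Y0 = Semi Y01 Z" "repl psi D (Semi D1 D2) Y01"
      "repl psi D (Fm (Imp A B)) Z" by blast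
  from repl_Semi_inv[OF z(2)] obtain E1 E2 where e: "Y01 = Semi E1 E2" "repl psi D D1 E1" "repl psi D D2 E2"
    by blast
  have h1: "cf E1 A" using impL.IH(1) e(2) by blast
  have "repl psi D (Semi D2 (Fm B)) (Semi E2 (Fm B))" using e(3) repl.rid by (rule repl.rsemi)
  then have h2: "cf (fill C' (Semi E2 (Fm B))) X" using impL.IH(2) repl_fill[OF y(2)] by blast
  from repl_Fm_inv[OF z(3)] show ?case
  proof
    assume "Z = Fm (Imp A B)" then show ?case using y(1) z(1) e(1) h1 h2 cf.impL by blast
  next
    assume "Imp A B = psi \<and> Z = D" then show ?case using y(1) z(1) e(1) h1 h2 Pimp by blast
  qed
next
  case (botL C0 A)
  from repl_fill_dec[OF botL.prems] obtain C' Y0 where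
    y: "Y = fill C' Y0" "replc psi D C0 C'" "repl psi D (Fm Bot) Y0" by blast
  from repl_Fm_inv[OF y(3)] show ?case
  proof
    assume "Y0 = Fm Bot" then show ?case using y(1) cf.botL by blast
  next
    assume "Bot = psi \<and> Y0 = D" then show ?case using y(1) Pbot by blast
  qed
next
  case (disjR1 D0 A B)
  then show ?case using cf.disjR1 by blast
next
  case (disjR2 D0 B A)
  then show ?case using cf.disjR2 by blast
next
  case (disjL C0 A X B)
  from repl_fill_dec[OF disjL.prems] obtain C' Y0 where
    y: "Y = fill C' Y0" "replc psi D C0 C'" "repl psi D (Fm (Disj A B)) Y0" by blast
  have h1: "cf (fill C' (Fm A)) X" using disjL.IH(1) repl_fill[OF y(2) repl.rid] by blast
  have h2: "cf (fill C' (Fm B)) X" using disjL.IH(2) repl_fill[OF y(2) repl.rid] by blast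
  from repl_Fm_inv[OF y(3)] show ?case
  proof
    assume "Y0 = Fm (Disj A B)" then show ?case using y(1) h1 h2 cf.disjL by blast
  next
    assume "Disj A B = psi \<and> Y0 = D" then show ?case using y(1) h1 h2 Pdisj by blast
  qed
next
  case (boxR D0 A)
  have "\<exists>Y1. Y = boxb Y1"
  proof (rule repl_boxb[of psi D])
    fix \<chi> assume "psi = Box \<chi>" then show "\<exists>F. D = boxb F" by (rule Hbox)
  next
    show "repl psi D (boxb D0) Y" by (rule boxR.prems)
  qed
  then obtain Y1 where "Y = boxb Y1" by blast
  then show ?case using boxR.IH boxR.prems cf.boxR by blast
next
  case (boxL C0 A B)
  from repl_fill_dec[OF boxL.prems] obtain C' Y0 where
    y: "Y = fill C' Y0" "replc psi D C0 C'" "repl psi D (Fm (Box A)) Y0" by blast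
  have h: "cf (fill C' (Fm A)) B" using boxL.IH repl_fill[OF y(2) repl.rid] by blast
  from repl_Fm_inv[OF y(3)] show ?case
  proof
    assume "Y0 = Fm (Box A)" then show ?case using y(1) h cf.boxL by blast
  next
    assume "Box A = psi \<and> Y0 = D" then show ?case using y(1) h Pbox by blast
  qed
qed



definition cutok :: "'a fm \<Rightarrow> 'a bunch \<Rightarrow> bool" where
  "cutok psi D \<longleftrightarrow> (\<forall>C phi. cf (fill C (Fm psi)) phi \<longrightarrow> cf (fill C D) phi)"

definition cutall :: "'a fm \<Rightarrow> bool" where
  "cutall psi \<longleftrightarrow> (\<forall>D. cf D psi \<longrightarrow> cutok psi D)"

declare beq.trans[trans]

lemma cut_use: "cutall A \<Longrightarrow> cf D A \<Longrightarrow> cf (fill C (Fm A)) phi \<Longrightarrow> cf (fill C D) phi"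
  unfolding cutall_def cutok_def by blast

lemma cut_use_ctx: "cutall A \<Longrightarrow> cf D A \<Longrightarrow> cf (fill C (fill E (Fm A))) phi \<Longrightarrow> cf (fill C (fill E D)) phi"
  using cut_use[of A D "ccomp C E" phi] by (simp add: fill_ccomp)

lemma cutok_lift: "(\<And>C0 phi. cf (fill C0 X') phi \<Longrightarrow> cf (fill C0 X) phi) \<Longrightarrow> cutok A X' \<Longrightarrow> cutok A X"
  unfolding cutok_def by blast

lemma right_single:
  assumes Hcf: "cf D psi"
  and Hbox: "\<And>\<chi>. psi = Box \<chi> \<Longrightarrow> \<exists>F. D = boxb F"
  and Pemp: "\<And>C \<phi>. psi = Emp \<Longrightarrow> cf (fill C EmpM) \<phi> \<Longrightarrow> cf (fill C D) \<phi>"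
  and Ptop: "\<And>C \<phi>. psi = Top \<Longrightarrow> cf (fill C EmpA) \<phi> \<Longrightarrow> cf (fill C D) \<phi>"
  and Pstar: "\<And>A B C \<phi>. psi = Star A B \<Longrightarrow> cf (fill C (Comma (Fm A) (Fm B))) \<phi> \<Longrightarrow> cf (fill C D) \<phi>"
  and Pconj: "\<And>A B C \<phi>. psi = Conj A B \<Longrightarrow> cf (fill C (Semi (Fm A) (Fm B))) \<phi> \<Longrightarrow> cf (fill C D) \<phi>"
  and Pwand: "\<And>A B C \<phi> E1 E2. psi = Wand A B \<Longrightarrow> cf E1 A \<Longrightarrow> cf (fill C (Comma E2 (Fm B))) \<phi>
                \<Longrightarrow> cf (fill C (Comma (Comma E1 E2) D)) \<phi>"
  and Pimp: "\<And>A B C \<phi> E1 E2. psi = Imp A B \<Longrightarrow> cf E1 A \<Longrightarrow> cf (fill C (Semi E2 (Fm B))) \<phi>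
                \<Longrightarrow> cf (fill C (Semi (Semi E1 E2) D)) \<phi>"
  and Pbot: "\<And>C \<phi>. psi = Bot \<Longrightarrow> cf (fill C D) \<phi>"
  and Pdisj: "\<And>A B C \<phi>. psi = Disj A B \<Longrightarrow> cf (fill C (Fm A)) \<phi> \<Longrightarrow> cf (fill C (Fm B)) \<phi> \<Longrightarrow> cf (fill C D) \<phi>"
  and Pbox: "\<And>A C \<phi>. psi = Box A \<Longrightarrow> cf (fill C (Fm A)) \<phi> \<Longrightarrow> cf (fill C D) \<phi>"
  shows "cutok psi D"
  unfolding cutok_def
proof (intro allI impI)
  fix C phi assume h: "cf (fill C (Fm psi)) phi"
  have r: "repl psi D (fill C (Fm psi)) (fill C D)" by (rule repl_fill[OF replc_refl repl.rfm])
  show "cf (fill C D) phi"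
    by (rule right_gen[OF h r Hcf Hbox Pemp Ptop Pstar Pconj Pwand Pimp Pbot Pdisj Pbox]) blast+
qed

lemma prin_star:
  assumes "cutall A" "cutall B" "cf D1 A" "cf D2 B" "cf (fill C (Comma (Fm A) (Fm B))) phi"
  shows "cf (fill C (Comma D1 D2)) phi"
proof -
  have "cf (fill C (fill (CommaL Hole (Fm B)) D1)) phi"
    by (rule cut_use_ctx[OF assms(1,3)]) (use assms(5) in simp)
  then have "cf (fill C (fill (CommaR D1 Hole) D2)) phi"
    by (intro cut_use_ctx[OF assms(2,4)]) simp
  then show ?thesis by simp
qed

lemma prin_conj:
  assumes "cutall A" "cutall B" "cf D1 A" "cf D2 B" "cf (fill C (Semi (Fm A) (Fm B))) phi"
  shows "cf (fill C (Semi D1 D2)) phi"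
proof -
  have "cf (fill C (fill (SemiL Hole (Fm B)) D1)) phi"
    by (rule cut_use_ctx[OF assms(1,3)]) (use assms(5) in simp)
  then have "cf (fill C (fill (SemiR D1 Hole) D2)) phi"
    by (intro cut_use_ctx[OF assms(2,4)]) simp
  then show ?thesis by simp
qed

lemma prin_wand:
  assumes "cutall A" "cutall B" "cf (Comma D0 (Fm A)) B" "cf E1 A" "cf (fill C (Comma E2 (Fm B))) phi"
  shows "cf (fill C (Comma (Comma E1 E2) D0)) phi"
proof -
  have "cf (fill C (fill (CommaR E2 Hole) (Comma D0 (Fm A)))) phi"
    by (rule cut_use_ctx[OF assms(2,3)]) (use assms(5) in simp)
  then have "cf (fill C (fill (CommaR E2 (CommaR D0 Hole)) E1)) phi"
    by (intro cut_use_ctx[OF assms(1,4)]) simp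
  then have c: "cf (fill C (Comma E2 (Comma D0 E1))) phi" by simp
  have "beq (Comma (Comma E1 E2) D0) (Comma D0 (Comma E1 E2))" by (rule beq.comma_comm)
  also have "beq \<dots> (Comma (Comma D0 E1) E2)" by (rule beq.comma_assoc)
  also have "beq \<dots> (Comma E2 (Comma D0 E1))" by (rule beq.comma_comm)
  finally have "beq (Comma (Comma E1 E2) D0) (Comma E2 (Comma D0 E1))" .
  then show ?thesis using c beq.cong cf.equiv by blast
qed

lemma prin_imp:
  assumes "cutall A" "cutall B" "cf (Semi D0 (Fm A)) B" "cf E1 A" "cf (fill C (Semi E2 (Fm B))) phi"
  shows "cf (fill C (Semi (Semi E1 E2) D0)) phi"
proof -
  have "cf (fill C (fill (SemiR E2 Hole) (Semi D0 (Fm A)))) phi"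
    by (rule cut_use_ctx[OF assms(2,3)]) (use assms(5) in simp)
  then have "cf (fill C (fill (SemiR E2 (SemiR D0 Hole)) E1)) phi"
    by (intro cut_use_ctx[OF assms(1,4)]) simp
  then have c: "cf (fill C (Semi E2 (Semi D0 E1))) phi" by simp
  have "beq (Semi (Semi E1 E2) D0) (Semi D0 (Semi E1 E2))" by (rule beq.semi_comm)
  also have "beq \<dots> (Semi (Semi D0 E1) E2)" by (rule beq.semi_assoc)
  also have "beq \<dots> (Semi E2 (Semi D0 E1))" by (rule beq.semi_comm)
  finally have "beq (Semi (Semi E1 E2) D0) (Semi E2 (Semi D0 E1))" .
  then show ?thesis using c beq.cong cf.equiv by blast
qed



lemma ctx_lift:
  assumes "\<And>C phi. cf (fill C x') phi \<Longrightarrow> cf (fill C x) phi"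
  and "P \<longrightarrow> cutok A (fill E x')"
  shows "P \<longrightarrow> cutok A (fill E x)"
proof
  assume P
  show "cutok A (fill E x)"
  proof (rule cutok_lift[of "fill E x'"])
    fix C0 phi assume "cf (fill C0 (fill E x')) phi"
    then have "cf (fill (ccomp C0 E) x') phi" by (simp add: fill_ccomp)
    then have "cf (fill (ccomp C0 E) x) phi" by (rule assms(1))
    then show "cf (fill C0 (fill E x)) phi" by (simp add: fill_ccomp)
  next
    show "cutok A (fill E x')" using assms(2) \<open>P\<close> by blast
  qed
qed

lemma left_gen:
  fixes D :: "'a bunch" and psi :: "'a fm"
  assumes "cf D psi"
  shows "(\<forall>\<chi>::'a fm. size \<chi> < size psi \<longrightarrow> cutall \<chi>) \<longrightarrow> cutok psi D"
  using assms
proof (induction rule: cf.induct)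
  case (ax a)
  then show ?case unfolding cutok_def by blast
next
  case (equiv D' A D)
  show ?case
  proof
    assume P: "\<forall>\<chi>::'a fm. size \<chi> < size A \<longrightarrow> cutall \<chi>"
    show "cutok A D"
    proof (rule cutok_lift[of D'])
      fix C0 phi assume "cf (fill C0 D') phi"
      then show "cf (fill C0 D) phi" using beq.cong[OF equiv.hyps(2)] cf.equiv by blast
    next
      show "cutok A D'" using equiv.IH P by blast
    qed
  qed
next
  case (weakSemi E D1 A D2)
  show ?case by (rule ctx_lift[OF cf.weakSemi weakSemi.IH])
next
  case (contrSemi E D1 A)
  show ?case by (rule ctx_lift[OF cf.contrSemi contrSemi.IH])
next
  case empR
  show ?case by (intro impI right_single) (simp_all add: cf.empR)
next
  case (empL E A)
  show ?case by (rule ctx_lift[OF cf.empL empL.IH])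
next
  case (starR D1 A D2 B)
  show ?case
  proof
    assume ih: "\<forall>\<chi>::'a fm. size \<chi> < size (Star A B) \<longrightarrow> cutall \<chi>"
    then have c: "cutall A" "cutall B" using ih[rule_format, of A] ih[rule_format, of B] by simp_all
    show "cutok (Star A B) (Comma D1 D2)"
      apply (rule right_single)
      apply (simp_all add: c starR.hyps cf.starR)
      by (metis prin_star c starR.hyps)
  qed
next
  case (starL E A B X)
  show ?case by (rule ctx_lift[OF cf.starL starL.IH])
next
  case (wandR D0 A B)
  show ?case
  proof
    assume ih: "\<forall>\<chi>::'a fm. size \<chi> < size (Wand A B) \<longrightarrow> cutall \<chi>"
    then have c: "cutall A" "cutall B" using ih[rule_format, of A] ih[rule_format, of B] by simp_all
    show "cutok (Wand A B) D0"
      apply (rule right_single)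
      apply (simp_all add: c wandR.hyps cf.wandR)
      by (metis prin_wand c wandR.hyps)
  qed
next
  case (wandL D1 A E D2 B X)
  show ?case by (rule ctx_lift[OF cf.wandL[OF wandL.hyps(1)] wandL.IH(2)])
next
  case topR
  show ?case by (intro impI right_single) (simp_all add: cf.topR)
next
  case (topL E A)
  show ?case by (rule ctx_lift[OF cf.topL topL.IH])
next
  case (conjR D1 A D2 B)
  show ?case
  proof
    assume ih: "\<forall>\<chi>::'a fm. size \<chi> < size (Conj A B) \<longrightarrow> cutall \<chi>"
    then have c: "cutall A" "cutall B" using ih[rule_format, of A] ih[rule_format, of B] by simp_all
    show "cutok (Conj A B) (Semi D1 D2)"
      apply (rule right_single)
      apply (simp_all add: c conjR.hyps cf.conjR)
      by (metis prin_conj c conjR.hyps)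
  qed
next
  case (conjL E A B X)
  show ?case by (rule ctx_lift[OF cf.conjL conjL.IH])
next
  case (impR D0 A B)
  show ?case
  proof
    assume ih: "\<forall>\<chi>::'a fm. size \<chi> < size (Imp A B) \<longrightarrow> cutall \<chi>"
    then have c: "cutall A" "cutall B" using ih[rule_format, of A] ih[rule_format, of B] by simp_all
    show "cutok (Imp A B) D0"
      apply (rule right_single)
      apply (simp_all add: c impR.hyps cf.impR)
      by (metis prin_imp c impR.hyps)
  qed
next
  case (impL D1 A E D2 B X)
  show ?case by (rule ctx_lift[OF cf.impL[OF impL.hyps(1)] impL.IH(2)])
next
  case (botL E A)
  have "\<And>C0 phi. cf (fill C0 (fill E (Fm Bot))) phi"
    using cf.botL by (metis fill_ccomp)
  then show ?case unfolding cutok_def by blast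
next
  case (disjR1 D0 A B)
  show ?case
  proof
    assume ih: "\<forall>\<chi>::'a fm. size \<chi> < size (Disj A B) \<longrightarrow> cutall \<chi>"
    then have c: "cutall A" using ih[rule_format, of A] by simp
    show "cutok (Disj A B) D0"
      apply (rule right_single)
      apply (simp_all add: c disjR1.hyps cf.disjR1)
      by (metis cut_use c disjR1.hyps)
  qed
next
  case (disjR2 D0 B A)
  show ?case
  proof
    assume ih: "\<forall>\<chi>::'a fm. size \<chi> < size (Disj A B) \<longrightarrow> cutall \<chi>"
    then have c: "cutall B" using ih[rule_format, of B] by simp
    show "cutok (Disj A B) D0"
      apply (rule right_single)
      apply (simp_all add: c disjR2.hyps cf.disjR2)
      by (metis cut_use c disjR2.hyps)
  qed
next
  case (disjL E A X B)
  show ?case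
  proof
    assume P: "\<forall>\<chi>::'a fm. size \<chi> < size X \<longrightarrow> cutall \<chi>"
    have c1: "cutok X (fill E (Fm A))" and c2: "cutok X (fill E (Fm B))" using disjL.IH P by blast+
    show "cutok X (fill E (Fm (Disj A B)))" unfolding cutok_def
    proof (intro allI impI)
      fix C0 phi assume h: "cf (fill C0 (Fm X)) phi"
      have "cf (fill (ccomp C0 E) (Fm A)) phi" using c1 h unfolding cutok_def by (simp add: fill_ccomp)
      moreover have "cf (fill (ccomp C0 E) (Fm B)) phi" using c2 h unfolding cutok_def by (simp add: fill_ccomp)
      ultimately have "cf (fill (ccomp C0 E) (Fm (Disj A B))) phi" by (rule cf.disjL)
      then show "cf (fill C0 (fill E (Fm (Disj A B)))) phi" by (simp add: fill_ccomp)
    qed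
  qed
next
  case (boxR D0 A)
  show ?case
  proof
    assume ih: "\<forall>\<chi>::'a fm. size \<chi> < size (Box A) \<longrightarrow> cutall \<chi>"
    then have c: "cutall A" using ih[rule_format, of A] by simp
    show "cutok (Box A) (boxb D0)"
      apply (rule right_single)
      apply (simp_all add: c boxR.hyps cf.boxR)
      by (metis cut_use c boxR.hyps)+
  qed
next
  case (boxL E A B)
  show ?case by (rule ctx_lift[OF cf.boxL boxL.IH])
qed

lemma cutall_all: "cutall psi"
proof (induction psi rule: measure_induct_rule[of size])
  case (less psi)
  then show ?case using left_gen unfolding cutall_def by blast
qed

theorem theorem8p6:
  fixes D :: "'a bunch" and C :: "'a ctx" and psi phi :: "'a fm"
  assumes "cf D psi" and "cf (fill C (Fm psi)) phi"
  shows "cf (fill C D) phi"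
  using cut_use[OF cutall_all assms] .

end
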